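(* Let $X$ and $Y$ be metric spaces and assume that $Y$ is metrically convex. Let $K\ge 0$ and let $f:X\to Y$ be a map that is co-coarsely continuous with constant $K$. Then for every $d>K$ there exists $c=c(d,K)>0$ such that for all $x\in X$ and all $r\ge d$, $$f(B_X(x,cr))^K\supseteq B_Y(f(x),r).$$
   Context: For a metric space $Z$, $B_Z(z,r)$ denotes the closed ball centered at $z$ of radius $r$. For a subset $A\subseteq Y$ and $K\ge0$, $A^K:=\{y\in Y: d_Y(y,a)\le K \text{ for some } a\in A\}$ is the closed $K$-neighborhood of $A$. A metric space $Y$ is metrically convex if for all $y_0,y_1\in Y$ and $0<\lambda<1$ there is $y_\lambda\in Y$ with $d(y_0,y_\lambda)=\lambda d(y_0,y_1)$ and $d(y_1,y_\lambda)=(1-\lambda)d(y_0,y_1)$. A map $f:X\to Y$ is co-coarsely continuous with constant $K\ge0$ if for every $d>K$ there exists $\delta=\delta(d)>0$ such that for all $x\in X$, $f(B_X(x,\delta))^K\supseteq B_Y(f(x),d)$. *)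

theory Defs
  imports "HOL-Analysis.Analysis"
begin

definition nbhd :: "'b::metric_space set \<Rightarrow> real \<Rightarrow> 'b set" where
  "nbhd A K = {y. \<exists>a\<in>A. dist y a \<le> K}"

definition metrically_convex :: "'b::metric_space itself \<Rightarrow> bool" where
  "metrically_convex (TYPE('b)) \<longleftrightarrow>
     (\<forall>(y0::'b) y1 (t::real). 0 < t \<and> t < 1 \<longrightarrow>
        (\<exists>y. dist y0 y = t * dist y0 y1 \<and> dist y1 y = (1 - t) * dist y0 y1))"

definition co_coarsely_continuous :: "('a::metric_space \<Rightarrow> 'b::metric_space) \<Rightarrow> real \<Rightarrow> bool" where
  "co_coarsely_continuous f K \<longleftrightarrow> K \<ge> 0 \<and>
     (\<forall>d>K. \<exists>\<delta>>0. \<forall>x. cball (f x) d \<subseteq> nbhd (f ` cball x \<delta>) K)"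

end

theory Submission
  imports Defs
begin

lemma step_lemma:
  fixes f :: "'a::metric_space \<Rightarrow> 'b::metric_space" and K d \<delta> :: real
  assumes conv: "metrically_convex TYPE('b)"
    and K: "K \<ge> 0" and dK: "d > K" and dp: "\<delta> > 0"
    and cc: "\<And>x. cball (f x) d \<subseteq> nbhd (f ` cball x \<delta>) K"
  shows "\<forall>x y. dist (f x) y \<le> d + real n * (d - K) \<longrightarrow>
           (\<exists>x'. dist x x' \<le> (real n + 1) * \<delta> \<and> dist y (f x') \<le> K)"
proof (induction n)
  case 0
  show ?case
  proof (intro allI impI)
    fix x y assume "dist (f x) y \<le> d + real 0 * (d - K)"
    then have "y \<in> cball (f x) d" by simp
    with cc[of x] obtain a where "a \<in> f ` cball x \<delta>" "dist y a \<le> K"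
      unfolding nbhd_def by blast
    then show "\<exists>x'. dist x x' \<le> (real 0 + 1) * \<delta> \<and> dist y (f x') \<le> K"
      by auto
  qed
next
  case (Suc n)
  show ?case
  proof (intro allI impI)
    fix x y assume hy: "dist (f x) y \<le> d + real (Suc n) * (d - K)"
    show "\<exists>x'. dist x x' \<le> (real (Suc n) + 1) * \<delta> \<and> dist y (f x') \<le> K"
    proof (cases "dist (f x) y \<le> d")
      case True
      then have "y \<in> cball (f x) d" by simp
      with cc[of x] obtain a where "a \<in> f ` cball x \<delta>" "dist y a \<le> K"
        unfolding nbhd_def by blast
      then obtain x1 where "dist x x1 \<le> \<delta>" "dist y (f x1) \<le> K" by auto
      moreover have "\<delta> \<le> (real (Suc n) + 1) * \<delta>" using dp by simp
      ultimately show ?thesis by (meson order_trans)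
    next
      case False
      define D where "D = dist (f x) y"
      have Dd: "D > d" using False D_def by simp
      have d0: "d > 0" using K dK by simp
      define t where "t = d / D"
      have t0: "0 < t" "t < 1" using Dd d0 unfolding t_def by auto
      obtain y1 where y1: "dist (f x) y1 = t * D" "dist y y1 = (1 - t) * D"
        using conv t0 unfolding metrically_convex_def D_def by blast
      have tD: "t * D = d" using Dd d0 unfolding t_def by simp
      have y1b: "y1 \<in> cball (f x) d" using y1 tD by simp
      with cc[of x] obtain a where "a \<in> f ` cball x \<delta>" "dist y1 a \<le> K"
        unfolding nbhd_def by blast
      then obtain x1 where x1: "dist x x1 \<le> \<delta>" "dist y1 (f x1) \<le> K" by auto
      have "dist y y1 = D - d" using y1 tD by (simp add: algebra_simps)
      have "dist (f x1) y \<le> dist y y1 + dist y1 (f x1)"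
        by (metis dist_commute dist_triangle)
      also have "\<dots> \<le> D - d + K" using x1 \<open>dist y y1 = D - d\<close> by simp
      also have "\<dots> \<le> d + real n * (d - K)" using hy D_def
        by (simp add: algebra_simps)
      finally obtain x' where x': "dist x1 x' \<le> (real n + 1) * \<delta>" "dist y (f x') \<le> K"
        using Suc.IH by blast
      have "dist x x' \<le> dist x x1 + dist x1 x'" by (rule dist_triangle)
      also have "\<dots> \<le> (real (Suc n) + 1) * \<delta>" using x1 x' by (simp add: algebra_simps)
      finally show ?thesis using x' by blast
    qed
  qed
qed

theorem lemma2p2:
  fixes f :: "'a::metric_space \<Rightarrow> 'b::metric_space" and K :: real
  assumes "metrically_convex TYPE('b)"
    and "K \<ge> 0"
    and "co_coarsely_continuous f K"
  shows "\<forall>d>K. \<exists>c>0. \<forall>x r. r \<ge> d \<longrightarrow> cball (f x) r \<subseteq> nbhd (f ` cball x (c * r)) K"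
proof (intro allI impI)
  fix d assume dK: "d > K"
  obtain \<delta> where dp: "\<delta> > 0" and cc: "\<And>x. cball (f x) d \<subseteq> nbhd (f ` cball x \<delta>) K"
    using assms(3) dK unfolding co_coarsely_continuous_def by blast
  have d0: "d > 0" using assms(2) dK by simp
  define c where "c = \<delta> * (1 / (d - K) + 2 / d)"
  have c0: "c > 0" using dp d0 dK unfolding c_def by (simp add: add_pos_pos)
  show "\<exists>c>0. \<forall>x r. r \<ge> d \<longrightarrow> cball (f x) r \<subseteq> nbhd (f ` cball x (c * r)) K"
  proof (intro exI[of _ c] conjI c0 allI impI subsetI)
    fix x r y assume rd: "r \<ge> d" and y: "y \<in> cball (f x) r"
    define n where "n = nat \<lceil>r / (d - K)\<rceil>"
    have n1: "real n \<ge> r / (d - K)" unfolding n_def by linarith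
    have n2: "real n \<le> r / (d - K) + 1" unfolding n_def using rd d0 dK
      by (simp add: divide_nonneg_pos)
    have "real n * (d - K) \<ge> r" using n1 dK by (simp add: field_simps)
    then have "dist (f x) y \<le> d + real n * (d - K)" using y d0 by simp
    then obtain x' where x': "dist x x' \<le> (real n + 1) * \<delta>" "dist y (f x') \<le> K"
      using step_lemma[OF assms(1) assms(2) dK dp cc, of n] by blast
    have "2 \<le> 2 * r / d" using rd d0 by (simp add: field_simps)
    then have "real n + 1 \<le> r / (d - K) + 2 * r / d" using n2 by linarith
    then have "(real n + 1) * \<delta> \<le> (r / (d - K) + 2 * r / d) * \<delta>"
      using dp by (simp add: mult_right_mono)
    also have "\<dots> = c * r" unfolding c_def by (simp add: algebra_simps)
    finally have "x' \<in> cball x (c * r)" using x' by simp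
    then show "y \<in> nbhd (f ` cball x (c * r)) K" using x' unfolding nbhd_def by blast
  qed
qed

end
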